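(* Let $u^*:\Omega\to\mathbb{R}$, the sample points $\bm x_1,\dots,\bm x_{N_1}$, the affine functions $u_1,\dots,u_{N_1}$, the index sets $J_{\geq,i},J_{\leq,i}$ and the approximations $\hat f_{\mathrm{L,d}},\hat f_{\mathrm{L,c}}$ be as in the context (with $N_s=N_1$). Suppose every sample point $\bm x_i$ lies in the interior of its UO region $\Gamma(\bm x_i)$, and suppose $$\min_{j\in J_{\geq,i}}u_j(\bm x_k)\le u_k(\bm x_k)\quad\text{and}\quad \max_{j\in J_{\leq,i}}u_j(\bm x_k)\ge u_k(\bm x_k)\qquad\forall\, i,k\in\{1,\dots,N_1\}.$$ Then for every $i\in\{1,\dots,N_1\}$, $$\hat f_{\mathrm{L,d}}(\bm x)=u^*(\bm x)\quad\text{and}\quad \hat f_{\mathrm{L,c}}(\bm x)=u^*(\bm x)\qquad\forall\,\bm x\in\Gamma(\bm x_i).$$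
   Context: Let $\Omega\subseteq\mathbb{R}^{n_x}$ be a convex polyhedron (a hyperbox) and $u^*:\Omega\to\mathbb{R}$ a continuous piecewise affine (PWA) function: $\Omega$ is the union of finitely many closed convex polyhedra (local regions) with pairwise disjoint interiors, and on each local region $u^*$ coincides with an affine function. (In the paper $u^*$ is the first input component of the explicit linear MPC optimal control law, which is continuous PWA.) Let $\ell_1,\dots,\ell_M$ be the distinct affine functions appearing as local pieces of $u^*$. A unique order (UO) region is a closed convex polyhedron contained in a local region such that, for all $a,b$, the order (sign of $\ell_a-\ell_b$) does not change in its interior; $\Omega$ is the union of finitely many UO regions. A sample point $\bm x_i\in\Omega$ lies in the interior of a UO region iff no two distinct functions among $\ell_1,\dots,\ell_M$ take the same value at $\bm x_i$; this UO region is denoted $\Gamma(\bm x_i)$. To each sample point $\bm x_i$ ($i=1,\dots,N_s$) is associated the affine function $u_i$ equal to the local piece of $u^*$ on $\Gamma(\bm x_i)$, so $u_i(\bm x)=u^*(\bm x)$ on $\Gamma(\bm x_i)$. Define $J_{\geq,i}=\{j\in\{1,\dots,N_s\}: u_j(\bm x_i)\ge u_i(\bm x_i)\}$, $J_{\leq,i}=\{j\in\{1,\dots,N_s\}: u_j(\bm x_i)\le u_i(\bm x_i)\}$, the disjunctive lattice PWA approximation $\hat f_{\mathrm{L,d}}(\bm x)=\max_{i=1,\dots,N_s}\min_{j\in J_{\geq,i}}u_j(\bm x)$ and the conjunctive lattice PWA approximation $\hat f_{\mathrm{L,c}}(\bm x)=\min_{i=1,\dots,N_s}\max_{j\in J_{\leq,i}}u_j(\bm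 x)$. *)

theory Defs
  imports "HOL-Analysis.Analysis"
begin

definition affine_fun :: "(real^'n \<Rightarrow> real) \<Rightarrow> bool" where
  "affine_fun f \<longleftrightarrow> (\<exists>a b. \<forall>x. f x = a \<bullet> x + b)"

definition pwa_on ::
  "(real^'n) set \<Rightarrow> (real^'n \<Rightarrow> real) \<Rightarrow> (real^'n) set set \<Rightarrow> ((real^'n) set \<Rightarrow> real^'n \<Rightarrow> real) \<Rightarrow> bool" where
  "pwa_on \<Omega> u Rs pc \<longleftrightarrow>
     continuous_on \<Omega> u \<and> finite Rs \<and> \<Union>Rs = \<Omega> \<and>
     (\<forall>R\<in>Rs. polyhedron R \<and> affine_fun (pc R) \<and> (\<forall>x\<in>R. u x = pc R x)) \<and>
     (\<forall>R\<in>Rs. \<forall>R'\<in>Rs. R \<noteq> R' \<longrightarrow> interior R \<inter> interior R' = {})"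

text \<open>Unique order region: closed convex polyhedron contained in a local region such that the
  order of any two local affine pieces does not change in its interior.\<close>
definition uo_region ::
  "(real^'n) set set \<Rightarrow> ((real^'n) set \<Rightarrow> real^'n \<Rightarrow> real) \<Rightarrow> (real^'n) set \<Rightarrow> bool" where
  "uo_region Rs pc G \<longleftrightarrow> polyhedron G \<and> (\<exists>R\<in>Rs. G \<subseteq> R) \<and>
     (\<forall>a\<in>pc ` Rs. \<forall>b\<in>pc ` Rs. \<forall>x\<in>interior G. \<forall>y\<in>interior G.
        sgn (a x - b x) = sgn (a y - b y))"

definition J_ge :: "nat \<Rightarrow> (nat \<Rightarrow> real^'n) \<Rightarrow> (nat \<Rightarrow> real^'n \<Rightarrow> real) \<Rightarrow> nat \<Rightarrow> nat set" where
  "J_ge N xs u i = {j \<in> {1..N}. u j (xs i) \<ge> u i (xs i)}"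

definition J_le :: "nat \<Rightarrow> (nat \<Rightarrow> real^'n) \<Rightarrow> (nat \<Rightarrow> real^'n \<Rightarrow> real) \<Rightarrow> nat \<Rightarrow> nat set" where
  "J_le N xs u i = {j \<in> {1..N}. u j (xs i) \<le> u i (xs i)}"

definition f_Ld :: "nat \<Rightarrow> (nat \<Rightarrow> real^'n) \<Rightarrow> (nat \<Rightarrow> real^'n \<Rightarrow> real) \<Rightarrow> real^'n \<Rightarrow> real" where
  "f_Ld N xs u x = (MAX i\<in>{1..N}. MIN j\<in>J_ge N xs u i. u j x)"

definition f_Lc :: "nat \<Rightarrow> (nat \<Rightarrow> real^'n) \<Rightarrow> (nat \<Rightarrow> real^'n \<Rightarrow> real) \<Rightarrow> real^'n \<Rightarrow> real" where
  "f_Lc N xs u x = (MIN i\<in>{1..N}. MAX j\<in>J_le N xs u i. u j x)"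

end

theory Submission
  imports Defs
begin

lemma key:
  fixes a b :: "real^'n \<Rightarrow> real"
  assumes "affine_fun a" "affine_fun b" "convex G" "closed G" "z \<in> interior G"
    "\<forall>y\<in>interior G. sgn (a y - b y) = sgn (a z - b z)" "a z \<le> b z" "x \<in> G"
  shows "a x \<le> b x"
proof -
  obtain c d where ab: "\<forall>x. a x = c \<bullet> x + d" using assms(1) unfolding affine_fun_def by blast
  obtain c' d' where bb: "\<forall>x. b x = c' \<bullet> x + d'" using assms(2) unfolding affine_fun_def by blast
  define S where "S = {y. (c - c') \<bullet> y \<le> d' - d}"
  have cS: "closed S" unfolding S_def by (rule closed_halfspace_le)
  have "interior G \<subseteq> S"
  proof
    fix y assume y: "y \<in> interior G"
    have "sgn (a y - b y) = sgn (a z - b z)" using assms(6) y by blast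
    moreover have "sgn (a z - b z) \<le> 0" using assms(7) by (simp add: sgn_real_def)
    ultimately have "a y \<le> b y" by (auto simp: sgn_real_def split: if_splits)
    thus "y \<in> S" using ab bb unfolding S_def by (simp add: inner_diff_left)
  qed
  hence "closure (interior G) \<subseteq> S" using cS closure_minimal by blast
  moreover have "closure (interior G) = G"
    using convex_closure_interior[OF assms(3)] assms(4,5) closure_closed by auto
  ultimately have "x \<in> S" using assms(8) by blast
  thus ?thesis using ab bb unfolding S_def by (simp add: inner_diff_left)
qed

theorem mainTheorem1:
  fixes lo hi :: "real^'n" and \<Omega> :: "(real^'n) set" and ustar :: "real^'n \<Rightarrow> real"
    and Rs :: "(real^'n) set set" and pc :: "(real^'n) set \<Rightarrow> real^'n \<Rightarrow> real"
    and N :: nat and xs :: "nat \<Rightarrow> real^'n" and u :: "nat \<Rightarrow> real^'n \<Rightarrow> real"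
    and \<Gamma> :: "nat \<Rightarrow> (real^'n) set"
  assumes box: "\<Omega> = cbox lo hi"
    and pwa: "pwa_on \<Omega> ustar Rs pc"
    and samples: "\<forall>i\<in>{1..N}. xs i \<in> \<Omega>"
    and uo: "\<forall>i\<in>{1..N}. uo_region Rs pc (\<Gamma> i) \<and> xs i \<in> interior (\<Gamma> i)"
    and piece: "\<forall>i\<in>{1..N}. \<exists>R\<in>Rs. \<Gamma> i \<subseteq> R \<and> u i = pc R"
    and cond: "\<forall>i\<in>{1..N}. \<forall>k\<in>{1..N}.
        (MIN j\<in>J_ge N xs u i. u j (xs k)) \<le> u k (xs k) \<and>
        (MAX j\<in>J_le N xs u i. u j (xs k)) \<ge> u k (xs k)"
  shows "\<forall>i\<in>{1..N}. \<forall>x\<in>\<Gamma> i. f_Ld N xs u x = ustar x \<and> f_Lc N xs u x = ustar x"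
proof (intro ballI)
  fix k x assume k: "k \<in> {1..N}" and x: "x \<in> \<Gamma> k"
  have aff: "\<And>j. j \<in> {1..N} \<Longrightarrow> affine_fun (u j) \<and> u j \<in> pc ` Rs"
    using piece pwa unfolding pwa_on_def by fastforce
  have G: "convex (\<Gamma> k)" "closed (\<Gamma> k)" "xs k \<in> interior (\<Gamma> k)"
    and sg: "\<forall>a\<in>pc ` Rs. \<forall>b\<in>pc ` Rs. \<forall>y\<in>interior (\<Gamma> k). \<forall>z\<in>interior (\<Gamma> k).
        sgn (a y - b y) = sgn (a z - b z)"
  proof -
    have u1: "uo_region Rs pc (\<Gamma> k)" and u2: "xs k \<in> interior (\<Gamma> k)" using uo k by blast+
    have p: "polyhedron (\<Gamma> k)" using u1 unfolding uo_region_def by blast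
    show "convex (\<Gamma> k)" by (rule polyhedron_imp_convex[OF p])
    show "closed (\<Gamma> k)" by (rule polyhedron_imp_closed[OF p])
    show "xs k \<in> interior (\<Gamma> k)" by (rule u2)
    show "\<forall>a\<in>pc ` Rs. \<forall>b\<in>pc ` Rs. \<forall>y\<in>interior (\<Gamma> k). \<forall>z\<in>interior (\<Gamma> k).
        sgn (a y - b y) = sgn (a z - b z)" using u1 unfolding uo_region_def by blast
  qed
  have ord: "u a x \<le> u b x" if "a \<in> {1..N}" "b \<in> {1..N}" "u a (xs k) \<le> u b (xs k)" for a b
  proof (rule key[where a="u a" and b="u b" and G="\<Gamma> k" and z="xs k"])
    show "\<forall>y\<in>interior (\<Gamma> k). sgn (u a y - u b y) = sgn (u a (xs k) - u b (xs k))"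
      using aff[OF that(1)] aff[OF that(2)] sg G(3) by blast
  qed (use aff[OF that(1)] aff[OF that(2)] G that(3) x in auto)
  have us: "ustar x = u k x"
  proof -
    obtain R where "R \<in> Rs" "\<Gamma> k \<subseteq> R" "u k = pc R" using piece k by blast
    thus ?thesis using pwa x unfolding pwa_on_def by auto
  qed
  have finge: "finite (J_ge N xs u i)" "finite (J_le N xs u i)" for i
    unfolding J_ge_def J_le_def by auto
  have inge: "i \<in> J_ge N xs u i" "i \<in> J_le N xs u i" if "i \<in> {1..N}" for i
    using that unfolding J_ge_def J_le_def by auto
  have subJ: "J_ge N xs u i \<subseteq> {1..N}" "J_le N xs u i \<subseteq> {1..N}" for i
    unfolding J_ge_def J_le_def by auto
  have ne: "{1..N} \<noteq> {}" using k by auto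
  have d1: "(MIN j\<in>J_ge N xs u k. u j x) = u k x"
  proof (rule antisym)
    show "(MIN j\<in>J_ge N xs u k. u j x) \<le> u k x" using inge(1)[OF k] finge(1) by simp
    show "u k x \<le> (MIN j\<in>J_ge N xs u k. u j x)"
      using inge(1)[OF k] finge(1)
      by (subst Min_ge_iff) (auto intro!: ord[OF k] simp: J_ge_def)
  qed
  have d2: "(MIN j\<in>J_ge N xs u i. u j x) \<le> u k x" if i: "i \<in> {1..N}" for i
  proof -
    have "(MIN j\<in>J_ge N xs u i. u j (xs k)) \<le> u k (xs k)" using cond i k by blast
    then obtain j where j: "j \<in> J_ge N xs u i" "u j (xs k) \<le> u k (xs k)"
      using inge(1)[OF i] finge(1) by (subst (asm) Min_le_iff) auto
    have "u j x \<le> u k x" using ord[OF _ k j(2)] subJ(1) j(1) by blast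
    moreover have "(MIN j\<in>J_ge N xs u i. u j x) \<le> u j x" using j(1) finge(1) by simp
    ultimately show ?thesis by linarith
  qed
  have "f_Ld N xs u x = u k x"
    unfolding f_Ld_def
  proof (rule antisym)
    show "(MAX i\<in>{1..N}. MIN j\<in>J_ge N xs u i. u j x) \<le> u k x"
      using ne d2 by (subst Max_le_iff) auto
    show "u k x \<le> (MAX i\<in>{1..N}. MIN j\<in>J_ge N xs u i. u j x)"
      using k d1 by (subst Max_ge_iff) (auto intro!: bexI[of _ k])
  qed
  have c1: "(MAX j\<in>J_le N xs u k. u j x) = u k x"
  proof (rule antisym)
    show "u k x \<le> (MAX j\<in>J_le N xs u k. u j x)" using inge(2)[OF k] finge(2) by simp
    show "(MAX j\<in>J_le N xs u k. u j x) \<le> u k x"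
      using inge(2)[OF k] finge(2)
      by (subst Max_le_iff) (auto intro!: ord[OF _ k] simp: J_le_def)
  qed
  have c2: "u k x \<le> (MAX j\<in>J_le N xs u i. u j x)" if i: "i \<in> {1..N}" for i
  proof -
    have "(MAX j\<in>J_le N xs u i. u j (xs k)) \<ge> u k (xs k)" using cond i k by blast
    then obtain j where j: "j \<in> J_le N xs u i" "u k (xs k) \<le> u j (xs k)"
      using inge(2)[OF i] finge(2) by (subst (asm) Max_ge_iff) auto
    have "u k x \<le> u j x" using ord[OF k _ j(2)] subJ(2) j(1) by blast
    moreover have "u j x \<le> (MAX j\<in>J_le N xs u i. u j x)" using j(1) finge(2) by simp
    ultimately show ?thesis by linarith
  qed
  have "f_Lc N xs u x = u k x"
    unfolding f_Lc_def
  proof (rule antisym)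
    show "(MIN i\<in>{1..N}. MAX j\<in>J_le N xs u i. u j x) \<le> u k x"
      using k c1 by (subst Min_le_iff) (auto intro!: bexI[of _ k])
    show "u k x \<le> (MIN i\<in>{1..N}. MAX j\<in>J_le N xs u i. u j x)"
      using ne c2 by (subst Min_ge_iff) auto
  qed
  with \<open>f_Ld N xs u x = u k x\<close> us show "f_Ld N xs u x = ustar x \<and> f_Lc N xs u x = ustar x" by simp
qed

end
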